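(* Let $C$ be a complex scheme of even type. Then the entries of $\vec c$ are: 1. $\vec c_{u_1}=-4(\Lambda^--\Lambda^+)$; 2. $\vec c_{u_2}=2(\Lambda^--\Lambda^+)$; 3. $\vec c_{u_3}=2(\Lambda^--\Lambda^+)$; 4. for each region $R$, $\vec c_R=(-1)^{\mathrm{par}(R)}\,2(\Lambda^-_R-\Lambda^+_R)$; 5. for each oval $o$, $\vec c_o=\vec s_o\big(4+4(\Pi^-_o-\Pi^+_o)\big)$.
   Context: A complex scheme $C$ in $\mathbb{R}P^2$ is a finite collection of disjoint smooth simple closed curves, up to isotopy, at most one of which is one-sided. The two-sided components are ovals, and $C$ carries a semi-orientation (orientations of all components up to simultaneous reversal). $C$ has odd type if it has a one-sided component $J$ and even type otherwise; in the even case an auxiliary oriented one-sided curve $J$ disjoint from the ovals is fixed. Numerical characteristics: - Regions are the components of $\mathbb{R}P^2\setminus(C\cup J)$, and the outer region $R_1$ is the one whose closure meets $J$. The parity $\mathrm{par}$ of a region or oval is the parity of the number of ovals crossed to reach $R_1$. - For an oval $o$ bounding a disk $D_o$ and $x\in\mathrm{int}D_o$, one has $[o]=\pm2[J]$ in $H_1(\mathbb{R}P^2\setminus\{x\})$; $o$ is negative if $[o]=2[J]$, positive otherwise, and $\epsilon(o)=\pm1$ accordingly. $\Lambda^\pm$ is the number of positive/negative ovals. - $\Lambda^\pm_R$ is the number of positive/negative ovals $o$ with $R\subset D_o$. - Two ovals form an injective pair if they bound an annulus. The pair is positive if their orientations are the boundary orientation of some orientation of the annulus, and negative otherwise. $\Pi^\pm_o$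 is the number of ovals forming a positive/negative injective pair with $o$. $\Gamma(C)$ is the weighted tree with vertices $R$ (weight $2\chi(R)$) for each region, $o$ (weight $0$) for each oval, and $u_1,u_2,u_3$ (weights $1,2,2$). Its edges are $Ro$ for $o\subset\partial R$, and $u_1u_2$, $u_1u_3$, $u_1R_1$. $A_\Gamma$ has the weights on the diagonal and $1$ for adjacent vertices, $0$ otherwise. $\vec s$ is indexed by vertices with $\vec s_{u_2}=1$ if $C$ has odd type (else $0$), $\vec s_o=(-1)^{\mathrm{par}(o)+1}\epsilon(o)$ for ovals $o$, and $0$ elsewhere. Finally $\vec c=-2\vec sA_\Gamma^{-1}$. *)

theory Defs
  imports Complex_Main
begin

text \<open>Combinatorial model of a complex scheme of even type in RP^2.
  Ovals form a finite set; par x = Some p means that x lies directly inside p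
  (p is the innermost oval whose disk contains x), par x = None means x is
  outermost.  eps x in {1,-1} is the sign epsilon(x) of the (semi-)oriented oval
  x with respect to the fixed oriented auxiliary one-sided curve J.\<close>

definition enc_rel :: "'a set \<Rightarrow> ('a \<Rightarrow> 'a option) \<Rightarrow> ('a \<times> 'a) set" where
  "enc_rel ovals par = {(x, p). x \<in> ovals \<and> par x = Some p}"

definition even_scheme :: "'a set \<Rightarrow> ('a \<Rightarrow> 'a option) \<Rightarrow> ('a \<Rightarrow> int) \<Rightarrow> bool" where
  "even_scheme ovals par eps \<longleftrightarrow>
     finite ovals \<and>
     (\<forall>x\<in>ovals. \<forall>p. par x = Some p \<longrightarrow> p \<in> ovals) \<and>
     acyclic (enc_rel ovals par) \<and>
     (\<forall>x\<in>ovals. eps x = 1 \<or> eps x = -1)"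

definition inside :: "'a set \<Rightarrow> ('a \<Rightarrow> 'a option) \<Rightarrow> 'a \<Rightarrow> 'a \<Rightarrow> bool" where
  "inside ovals par x p \<longleftrightarrow> (x, p) \<in> (enc_rel ovals par)\<^sup>+"

definition depth :: "'a set \<Rightarrow> ('a \<Rightarrow> 'a option) \<Rightarrow> 'a \<Rightarrow> nat" where
  "depth ovals par x = card {p. inside ovals par x p}"

definition children :: "'a set \<Rightarrow> ('a \<Rightarrow> 'a option) \<Rightarrow> 'a \<Rightarrow> 'a set" where
  "children ovals par p = {x \<in> ovals. par x = Some p}"

definition roots :: "'a set \<Rightarrow> ('a \<Rightarrow> 'a option) \<Rightarrow> 'a set" where
  "roots ovals par = {x \<in> ovals. par x = None}"

text \<open>Vertices of Gamma(C): u1,u2,u3, the outer region R_1, the region RIn p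
  directly inside the oval p (bounded by p and the children of p), and the ovals.\<close>
datatype 'a gvert = U1 | U2 | U3 | ROut | RIn 'a | Ov 'a

definition regions :: "'a set \<Rightarrow> 'a gvert set" where
  "regions ovals = insert ROut (RIn ` ovals)"

definition verts :: "'a set \<Rightarrow> 'a gvert set" where
  "verts ovals = {U1, U2, U3} \<union> regions ovals \<union> Ov ` ovals"

text \<open>Euler characteristic of a region (component of RP^2 minus (C union J)).
  R_1 cut along J is an open disk minus the outermost closed disks.\<close>
fun region_chi :: "'a set \<Rightarrow> ('a \<Rightarrow> 'a option) \<Rightarrow> 'a gvert \<Rightarrow> int" where
  "region_chi ovals par ROut = 1 - int (card (roots ovals par))"
| "region_chi ovals par (RIn p) = 1 - int (card (children ovals par p))"
| "region_chi ovals par _ = 0"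

fun weight :: "'a set \<Rightarrow> ('a \<Rightarrow> 'a option) \<Rightarrow> 'a gvert \<Rightarrow> int" where
  "weight ovals par U1 = 1"
| "weight ovals par U2 = 2"
| "weight ovals par U3 = 2"
| "weight ovals par ROut = 2 * region_chi ovals par ROut"
| "weight ovals par (RIn p) = 2 * region_chi ovals par (RIn p)"
| "weight ovals par (Ov x) = 0"

definition edges :: "'a set \<Rightarrow> ('a \<Rightarrow> 'a option) \<Rightarrow> ('a gvert \<times> 'a gvert) set" where
  "edges ovals par =
     {(U1, U2), (U1, U3), (U1, ROut)}
     \<union> {(ROut, Ov x) | x. x \<in> ovals \<and> par x = None}
     \<union> {(RIn p, Ov x) | x p. x \<in> ovals \<and> par x = Some p}
     \<union> {(RIn x, Ov x) | x. x \<in> ovals}"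

definition adjacent :: "'a set \<Rightarrow> ('a \<Rightarrow> 'a option) \<Rightarrow> 'a gvert \<Rightarrow> 'a gvert \<Rightarrow> bool" where
  "adjacent ovals par v w \<longleftrightarrow> (v, w) \<in> edges ovals par \<or> (w, v) \<in> edges ovals par"

definition gamma_mat :: "'a set \<Rightarrow> ('a \<Rightarrow> 'a option) \<Rightarrow> 'a gvert \<Rightarrow> 'a gvert \<Rightarrow> real" where
  "gamma_mat ovals par v w =
     (if v = w then real_of_int (weight ovals par v)
      else if adjacent ovals par v w then 1 else 0)"

fun vpar :: "'a set \<Rightarrow> ('a \<Rightarrow> 'a option) \<Rightarrow> 'a gvert \<Rightarrow> nat" where
  "vpar ovals par ROut = 0"
| "vpar ovals par (RIn p) = depth ovals par p + 1"
| "vpar ovals par (Ov x) = depth ovals par x"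
| "vpar ovals par _ = 0"

text \<open>The vector s (even type, so s_{u2} = 0).\<close>
definition s_vec :: "'a set \<Rightarrow> ('a \<Rightarrow> 'a option) \<Rightarrow> ('a \<Rightarrow> int) \<Rightarrow> 'a gvert \<Rightarrow> real" where
  "s_vec ovals par eps v =
     (case v of Ov x \<Rightarrow> (-1) ^ (vpar ovals par (Ov x) + 1) * real_of_int (eps x) | _ \<Rightarrow> 0)"

definition is_inverse_on :: "'v set \<Rightarrow> ('v \<Rightarrow> 'v \<Rightarrow> real) \<Rightarrow> ('v \<Rightarrow> 'v \<Rightarrow> real) \<Rightarrow> bool" where
  "is_inverse_on V A B \<longleftrightarrow>
     (\<forall>v\<in>V. \<forall>w\<in>V. (\<Sum>u\<in>V. A v u * B u w) = (if v = w then 1 else 0)) \<and>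
     (\<forall>v\<in>V. \<forall>w\<in>V. (\<Sum>u\<in>V. B v u * A u w) = (if v = w then 1 else 0))"

definition invertible_on :: "'v set \<Rightarrow> ('v \<Rightarrow> 'v \<Rightarrow> real) \<Rightarrow> bool" where
  "invertible_on V A \<longleftrightarrow> (\<exists>B. is_inverse_on V A B)"

definition inverse_on :: "'v set \<Rightarrow> ('v \<Rightarrow> 'v \<Rightarrow> real) \<Rightarrow> 'v \<Rightarrow> 'v \<Rightarrow> real" where
  "inverse_on V A = (SOME B. is_inverse_on V A B)"

definition c_vec :: "'a set \<Rightarrow> ('a \<Rightarrow> 'a option) \<Rightarrow> ('a \<Rightarrow> int) \<Rightarrow> 'a gvert \<Rightarrow> real" where
  "c_vec ovals par eps v =
     -2 * (\<Sum>w\<in>verts ovals. s_vec ovals par eps w * inverse_on (verts ovals) (gamma_mat ovals par) w v)"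

definition Lam_plus :: "'a set \<Rightarrow> ('a \<Rightarrow> int) \<Rightarrow> nat" where
  "Lam_plus ovals eps = card {x \<in> ovals. eps x = 1}"
definition Lam_minus :: "'a set \<Rightarrow> ('a \<Rightarrow> int) \<Rightarrow> nat" where
  "Lam_minus ovals eps = card {x \<in> ovals. eps x = -1}"

fun region_in_disk :: "'a set \<Rightarrow> ('a \<Rightarrow> 'a option) \<Rightarrow> 'a gvert \<Rightarrow> 'a \<Rightarrow> bool" where
  "region_in_disk ovals par (RIn p) x \<longleftrightarrow> x \<in> ovals \<and> (p = x \<or> inside ovals par p x)"
| "region_in_disk ovals par _ x \<longleftrightarrow> False"

definition Lam_plus_R :: "'a set \<Rightarrow> ('a \<Rightarrow> 'a option) \<Rightarrow> ('a \<Rightarrow> int) \<Rightarrow> 'a gvert \<Rightarrow> nat" where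
  "Lam_plus_R ovals par eps R = card {x \<in> ovals. eps x = 1 \<and> region_in_disk ovals par R x}"
definition Lam_minus_R :: "'a set \<Rightarrow> ('a \<Rightarrow> 'a option) \<Rightarrow> ('a \<Rightarrow> int) \<Rightarrow> 'a gvert \<Rightarrow> nat" where
  "Lam_minus_R ovals par eps R = card {x \<in> ovals. eps x = -1 \<and> region_in_disk ovals par R x}"

text \<open>Injective pairs: two ovals bound an annulus iff one lies inside the disk of
  the other.  The pair is positive iff the orientations are the boundary
  orientation of the annulus, i.e. iff the two (concentric) ovals have opposite
  homology classes, i.e. opposite signs eps.\<close>
definition injective_pair :: "'a set \<Rightarrow> ('a \<Rightarrow> 'a option) \<Rightarrow> 'a \<Rightarrow> 'a \<Rightarrow> bool" where
  "injective_pair ovals par x y \<longleftrightarrow>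
     x \<in> ovals \<and> y \<in> ovals \<and> (inside ovals par x y \<or> inside ovals par y x)"

definition Pi_plus :: "'a set \<Rightarrow> ('a \<Rightarrow> 'a option) \<Rightarrow> ('a \<Rightarrow> int) \<Rightarrow> 'a \<Rightarrow> nat" where
  "Pi_plus ovals par eps x = card {y \<in> ovals. injective_pair ovals par x y \<and> eps y \<noteq> eps x}"
definition Pi_minus :: "'a set \<Rightarrow> ('a \<Rightarrow> 'a option) \<Rightarrow> ('a \<Rightarrow> int) \<Rightarrow> 'a \<Rightarrow> nat" where
  "Pi_minus ovals par eps x = card {y \<in> ovals. injective_pair ovals par x y \<and> eps y = eps x}"

end

theory Submission
  imports Defs
begin

locale ptree =
  fixes ovals :: "'a set" and par :: "'a \<Rightarrow> 'a option"
  assumes fin: "finite ovals"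
    and closed: "\<forall>x\<in>ovals. \<forall>p. par x = Some p \<longrightarrow> p \<in> ovals"
    and acyc: "acyclic (enc_rel ovals par)"
begin

abbreviation "r \<equiv> enc_rel ovals par"

lemma r_iff: "(x,y) \<in> r \<longleftrightarrow> x \<in> ovals \<and> par x = Some y"
  by (simp add: enc_rel_def)

lemma sv: "single_valued r"
  by (auto simp: single_valued_def enc_rel_def)

lemma rt_none: "x \<notin> ovals \<or> par x = None \<Longrightarrow> (x,y) \<in> r\<^sup>* \<longleftrightarrow> y = x"
  by (auto elim: converse_rtranclE simp: r_iff)

lemma rt_some: "x \<in> ovals \<Longrightarrow> par x = Some p \<Longrightarrow> (x,y) \<in> r\<^sup>* \<longleftrightarrow> y = x \<or> (p,y) \<in> r\<^sup>*"
  apply (rule iffI)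
   apply (erule converse_rtranclE) apply (auto simp: r_iff)[2]
  apply (auto intro: converse_rtrancl_into_rtrancl simp: r_iff)
  done

lemma tr_some: "x \<in> ovals \<Longrightarrow> par x = Some p \<Longrightarrow> (x,y) \<in> r\<^sup>+ \<longleftrightarrow> (p,y) \<in> r\<^sup>*"
  apply (rule iffI)
   apply (erule converse_tranclE) apply (auto simp: r_iff)[2]
  apply (auto intro: rtrancl_into_trancl2 simp: r_iff)
  done

lemma tr_none: "x \<notin> ovals \<or> par x = None \<Longrightarrow> (x,y) \<notin> r\<^sup>+"
  by (auto elim: converse_tranclE simp: r_iff)

lemma no_cycle: "(x,y) \<in> r\<^sup>+ \<Longrightarrow> (y,x) \<in> r\<^sup>* \<Longrightarrow> False"
  using acyc unfolding acyclic_def by (meson trancl_rtrancl_trancl)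

lemma no_self: "x \<in> ovals \<Longrightarrow> par x \<noteq> Some x"
proof
  assume "x \<in> ovals" "par x = Some x"
  then have "(x,x) \<in> r\<^sup>+" by (simp add: r_iff r_into_trancl')
  then show False using acyc by (simp add: acyclic_def)
qed

lemma tr_range: "(x,y) \<in> r\<^sup>+ \<Longrightarrow> y \<in> ovals"
  by (induction rule: trancl_induct) (auto simp: r_iff closed)

lemma depth_none: "x \<notin> ovals \<or> par x = None \<Longrightarrow> depth ovals par x = 0"
  using tr_none by (simp add: depth_def inside_def)

lemma depth_some: assumes "x \<in> ovals" "par x = Some p"
  shows "depth ovals par x = Suc (depth ovals par p)"
proof -
  have "{q. (x,q) \<in> r\<^sup>+} = insert p {q. (p,q) \<in> r\<^sup>+}"
    using tr_some[OF assms] by (auto simp: rtrancl_eq_or_trancl)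
  moreover have "p \<notin> {q. (p,q) \<in> r\<^sup>+}" using acyc by (simp add: acyclic_def)
  moreover have "finite {q. (p,q) \<in> r\<^sup>+}"
    by (rule finite_subset[OF _ fin]) (auto dest: tr_range)
  ultimately show ?thesis by (simp add: depth_def inside_def)
qed

lemma comparable: "(y,a) \<in> r\<^sup>* \<Longrightarrow> (y,b) \<in> r\<^sup>* \<Longrightarrow> (a,b) \<in> r\<^sup>* \<or> (b,a) \<in> r\<^sup>*"
  using single_valued_confluent[OF sv] by blast


definition sg :: "'a \<Rightarrow> real" where "sg x = (-1) ^ depth ovals par x"

lemma sg_root: "x \<notin> ovals \<or> par x = None \<Longrightarrow> sg x = 1"
  by (simp add: sg_def depth_none)

lemma sg_child: "x \<in> ovals \<Longrightarrow> par x = Some p \<Longrightarrow> sg x = - sg p"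
  by (simp add: sg_def depth_some)

lemma sg_sq: "sg x * sg x = 1"
  by (simp add: sg_def flip: power_add)

lemma root_ex: "q \<in> ovals \<Longrightarrow> \<exists>\<rho>\<in>ovals. par \<rho> = None \<and> (q,\<rho>) \<in> r\<^sup>*"
proof (induction "depth ovals par q" arbitrary: q rule: less_induct)
  case less
  show ?case
  proof (cases "par q")
    case None then show ?thesis using less by auto
  next
    case (Some p)
    have "p \<in> ovals" using closed less Some by auto
    moreover have "depth ovals par p < depth ovals par q" using depth_some[OF less.prems Some] by simp
    ultimately obtain \<rho> where "\<rho>\<in>ovals" "par \<rho> = None" "(p,\<rho>) \<in> r\<^sup>*" using less by blast
    moreover have "(q,p) \<in> r" using less.prems Some by (simp add: r_iff)
    ultimately show ?thesis by (meson converse_rtrancl_into_rtrancl)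
  qed
qed

lemma fin_roots: "finite (roots ovals par)" using fin by (simp add: roots_def)
lemma fin_ch: "finite (children ovals par p)" using fin by (simp add: children_def)

lemma sum_root_ind:
  assumes "q \<in> ovals"
  shows "(\<Sum>\<rho>\<in>roots ovals par. if (q,\<rho>) \<in> r\<^sup>* then a else 0) = a"
proof -
  obtain \<rho>0 where r0: "\<rho>0\<in>ovals" "par \<rho>0 = None" "(q,\<rho>0) \<in> r\<^sup>*" using root_ex[OF assms] by blast
  have "{\<rho>\<in>roots ovals par. (q,\<rho>) \<in> r\<^sup>*} = {\<rho>0}"
  proof (safe)
    fix \<rho> assume "\<rho> \<in> roots ovals par" "(q,\<rho>) \<in> r\<^sup>*"
    then have "\<rho> \<in> ovals" "par \<rho> = None" by (auto simp: roots_def)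
    from comparable[OF \<open>(q,\<rho>) \<in> r\<^sup>*\<close> r0(3)] show "\<rho> = \<rho>0"
      using rt_none[of \<rho> \<rho>0] rt_none[of \<rho>0 \<rho>] r0 \<open>par \<rho> = None\<close> by auto
  qed (use r0 in \<open>auto simp: roots_def\<close>)
  then show ?thesis using fin_roots by (simp add: sum.If_cases Int_def)
qed

lemma sum_ch_ind:
  assumes "p \<in> ovals"
  shows "(\<Sum>c\<in>children ovals par p. if (y,c) \<in> r\<^sup>* then a else 0) = (if (y,p) \<in> r\<^sup>* \<and> y \<noteq> p then a else 0)"
proof (cases "(y,p) \<in> r\<^sup>* \<and> y \<noteq> p")
  case True
  then obtain c0 where c0: "(y,c0) \<in> r\<^sup>*" "(c0,p) \<in> r" by (meson rtranclE)
  have "{c\<in>children ovals par p. (y,c) \<in> r\<^sup>*} = {c0}"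
  proof (safe)
    fix c assume c: "c \<in> children ovals par p" "(y,c) \<in> r\<^sup>*"
    show "c = c0"
    proof (rule ccontr)
      assume ne: "c \<noteq> c0"
      from comparable[OF c(2) c0(1)] show False
      proof
        assume "(c,c0) \<in> r\<^sup>*"
        then have "(p,c0) \<in> r\<^sup>*" using rt_some[of c p c0] c ne by (auto simp: children_def)
        then show False using no_cycle c0(2) by blast
      next
        assume "(c0,c) \<in> r\<^sup>*"
        then have "(p,c) \<in> r\<^sup>*" using rt_some[of c0 p c] c0 ne by (auto simp: r_iff)
        moreover have "(c,p) \<in> r\<^sup>+" using c by (auto simp: children_def r_iff)
        ultimately show False using no_cycle by blast
      qed
    qed
  qed (use c0 in \<open>auto simp: children_def r_iff\<close>)
  then show ?thesis using True fin_ch by (simp add: sum.If_cases Int_def)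
next
  case False
  have "{c\<in>children ovals par p. (y,c) \<in> r\<^sup>*} = {}"
  proof (safe)
    fix c assume c: "c \<in> children ovals par p" "(y,c) \<in> r\<^sup>*"
    then have "(c,p) \<in> r" by (auto simp: children_def r_iff)
    then have "(y,p) \<in> r\<^sup>*" "y \<noteq> p" using c(2) no_cycle by auto
    then show "c \<in> {}" using False by blast
  qed
  then show ?thesis using False fin_ch by (simp add: sum.If_cases Int_def) blast
qed


fun Bm :: "'a gvert \<Rightarrow> 'a gvert \<Rightarrow> real" where
  "Bm U1 U1 = -2" | "Bm U1 U2 = 1" | "Bm U1 U3 = 1" | "Bm U1 ROut = 1"
| "Bm U1 (RIn p) = - sg p" | "Bm U1 (Ov x) = 2 * sg x"
| "Bm U2 U1 = 1" | "Bm U2 U2 = 0" | "Bm U2 U3 = -1/2" | "Bm U2 ROut = -1/2"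
| "Bm U2 (RIn p) = sg p / 2" | "Bm U2 (Ov x) = - sg x"
| "Bm U3 U1 = 1" | "Bm U3 U2 = -1/2" | "Bm U3 U3 = 0" | "Bm U3 ROut = -1/2"
| "Bm U3 (RIn p) = sg p / 2" | "Bm U3 (Ov x) = - sg x"
| "Bm ROut U1 = 1" | "Bm ROut U2 = -1/2" | "Bm ROut U3 = -1/2" | "Bm ROut ROut = 0"
| "Bm ROut (RIn p) = 0" | "Bm ROut (Ov x) = 0"
| "Bm (RIn p) U1 = - sg p" | "Bm (RIn p) U2 = sg p / 2" | "Bm (RIn p) U3 = sg p / 2"
| "Bm (RIn p) ROut = 0" | "Bm (RIn p) (RIn q) = 0"
| "Bm (RIn p) (Ov x) = (if (p,x) \<in> r\<^sup>* then sg p * sg x else 0)"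
| "Bm (Ov x) U1 = 2 * sg x" | "Bm (Ov x) U2 = - sg x" | "Bm (Ov x) U3 = - sg x"
| "Bm (Ov x) ROut = 0"
| "Bm (Ov x) (RIn p) = (if (p,x) \<in> r\<^sup>* then sg p * sg x else 0)"
| "Bm (Ov x) (Ov y) = (if (x,y) \<in> r\<^sup>* \<or> (y,x) \<in> r\<^sup>* then -2 * sg x * sg y else 0)"

lemma Bm_sym: "Bm v w = Bm w v"
  by (cases v; cases w) auto

lemma gm_sym: "gamma_mat ovals par v w = gamma_mat ovals par w v"
  by (auto simp: gamma_mat_def adjacent_def)

lemma sum_verts:
  "(\<Sum>u\<in>verts ovals. g u) = g U1 + g U2 + g U3 + g ROut + (\<Sum>p\<in>ovals. g (RIn p)) + (\<Sum>x\<in>ovals. g (Ov x))"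
proof -
  have V: "verts ovals = {U1, U2, U3, ROut} \<union> (RIn ` ovals \<union> Ov ` ovals)"
    by (auto simp: verts_def regions_def)
  have "(\<Sum>u\<in>verts ovals. g u) = (\<Sum>u\<in>{U1, U2, U3, ROut}. g u) + (\<Sum>u\<in>RIn ` ovals \<union> Ov ` ovals. g u)"
    unfolding V by (rule sum.union_disjoint) (auto simp: fin)
  also have "(\<Sum>u\<in>RIn ` ovals \<union> Ov ` ovals. g u) = (\<Sum>u\<in>RIn ` ovals. g u) + (\<Sum>u\<in>Ov ` ovals. g u)"
    by (rule sum.union_disjoint) (auto simp: fin)
  also have "(\<Sum>u\<in>RIn ` ovals. g u) = (\<Sum>p\<in>ovals. g (RIn p))"
    by (simp add: sum.reindex inj_on_def)
  also have "(\<Sum>u\<in>Ov ` ovals. g u) = (\<Sum>p\<in>ovals. g (Ov p))"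
    by (simp add: sum.reindex inj_on_def)
  finally show ?thesis by (simp add: add.assoc)
qed

lemma fin_verts: "finite (verts ovals)"
  using fin by (simp add: verts_def regions_def)

lemma row_U1: "(\<Sum>u\<in>verts ovals. gamma_mat ovals par U1 u * f u) = f U1 + f U2 + f U3 + f ROut"
  by (simp add: sum_verts gamma_mat_def adjacent_def edges_def)

lemma row_U2: "(\<Sum>u\<in>verts ovals. gamma_mat ovals par U2 u * f u) = 2 * f U2 + f U1"
  by (simp add: sum_verts gamma_mat_def adjacent_def edges_def)

lemma row_U3: "(\<Sum>u\<in>verts ovals. gamma_mat ovals par U3 u * f u) = 2 * f U3 + f U1"
  by (simp add: sum_verts gamma_mat_def adjacent_def edges_def)

lemma row_RO: "(\<Sum>u\<in>verts ovals. gamma_mat ovals par ROut u * f u)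
   = 2 * (1 - real (card (roots ovals par))) * f ROut + f U1 + (\<Sum>x\<in>roots ovals par. f (Ov x))"
proof -
  have "(\<Sum>x\<in>ovals. gamma_mat ovals par ROut (Ov x) * f (Ov x)) = (\<Sum>x\<in>ovals. if x \<in> roots ovals par then f (Ov x) else 0)"
    by (rule sum.cong) (auto simp: gamma_mat_def adjacent_def edges_def roots_def)
  also have "\<dots> = (\<Sum>x\<in>roots ovals par. f (Ov x))"
    using fin by (simp add: sum.If_cases Int_def roots_def)
  finally show ?thesis by (simp add: sum_verts gamma_mat_def adjacent_def edges_def)
qed

lemma row_R: assumes "p \<in> ovals"
  shows "(\<Sum>u\<in>verts ovals. gamma_mat ovals par (RIn p) u * f u)
   = 2 * (1 - real (card (children ovals par p))) * f (RIn p) + f (Ov p) + (\<Sum>x\<in>children ovals par p. f (Ov x))"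
proof -
  have pc: "p \<notin> children ovals par p"
    using no_self assms by (auto simp: children_def)
  have "(\<Sum>x\<in>ovals. gamma_mat ovals par (RIn p) (Ov x) * f (Ov x)) = (\<Sum>x\<in>ovals. if x \<in> insert p (children ovals par p) then f (Ov x) else 0)"
    by (rule sum.cong) (auto simp: gamma_mat_def adjacent_def edges_def children_def)
  also have "\<dots> = (\<Sum>x\<in>insert p (children ovals par p). f (Ov x))"
  proof -
    have "{x\<in>ovals. x \<in> insert p (children ovals par p)} = insert p (children ovals par p)"
      using assms by (auto simp: children_def)
    then show ?thesis using fin by (simp add: sum.If_cases Int_def)
  qed
  also have "\<dots> = f (Ov p) + (\<Sum>x\<in>children ovals par p. f (Ov x))"
    using pc fin_ch by simp
  finally have 1: "(\<Sum>x\<in>ovals. gamma_mat ovals par (RIn p) (Ov x) * f (Ov x)) = f (Ov p) + (\<Sum>x\<in>children ovals par p. f (Ov x))" .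
  have 2: "(\<Sum>q\<in>ovals. gamma_mat ovals par (RIn p) (RIn q) * f (RIn q)) = 2 * (1 - real (card (children ovals par p))) * f (RIn p)"
  proof -
    have "(\<Sum>q\<in>ovals. gamma_mat ovals par (RIn p) (RIn q) * f (RIn q)) = (\<Sum>q\<in>ovals. if p = q then 2 * (1 - real (card (children ovals par p))) * f (RIn p) else 0)"
      by (rule sum.cong) (auto simp: gamma_mat_def adjacent_def edges_def)
    then show ?thesis using fin assms by simp
  qed
  show ?thesis using 1 2 by (simp add: sum_verts gamma_mat_def adjacent_def edges_def)
qed

lemma row_O: assumes "x \<in> ovals"
  shows "(\<Sum>u\<in>verts ovals. gamma_mat ovals par (Ov x) u * f u)
   = f (case par x of None \<Rightarrow> ROut | Some p \<Rightarrow> RIn p) + f (RIn x)"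
proof -
  have 1: "(\<Sum>y\<in>ovals. gamma_mat ovals par (Ov x) (Ov y) * f (Ov y)) = 0"
    by (rule sum.neutral) (auto simp: gamma_mat_def adjacent_def edges_def)
  show ?thesis
  proof (cases "par x")
    case None
    have "(\<Sum>q\<in>ovals. gamma_mat ovals par (Ov x) (RIn q) * f (RIn q)) = (\<Sum>q\<in>ovals. if q = x then f (RIn x) else 0)"
      by (rule sum.cong) (use None in \<open>auto simp: gamma_mat_def adjacent_def edges_def\<close>)
    then show ?thesis using 1 None assms fin by (simp add: sum_verts gamma_mat_def adjacent_def edges_def)
  next
    case (Some p)
    have p: "p \<in> ovals" "p \<noteq> x" using closed assms Some no_self by auto
    have "(\<Sum>q\<in>ovals. gamma_mat ovals par (Ov x) (RIn q) * f (RIn q)) = (\<Sum>q\<in>ovals. (if q = x then f (RIn x) else 0) + (if q = p then f (RIn p) else 0))"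
      by (rule sum.cong) (use Some p assms in \<open>auto simp: gamma_mat_def adjacent_def edges_def\<close>)
    also have "\<dots> = f (RIn x) + f (RIn p)" using fin assms p(1) by (simp add: sum.distrib)
    finally show ?thesis using 1 Some assms fin by (simp add: sum_verts gamma_mat_def adjacent_def edges_def)
  qed
qed


lemma sg_rootm: "x \<in> roots ovals par \<Longrightarrow> sg x = 1"
  by (simp add: roots_def sg_root)

lemma sg_chm: "x \<in> children ovals par p \<Longrightarrow> sg x = - sg p"
  by (simp add: children_def sg_child)

lemma AB_U1: "w \<in> verts ovals \<Longrightarrow> (\<Sum>u\<in>verts ovals. gamma_mat ovals par U1 u * Bm u w) = (if U1 = w then 1 else 0)"
  unfolding row_U1 by (cases w) auto

lemma AB_U2: "w \<in> verts ovals \<Longrightarrow> (\<Sum>u\<in>verts ovals. gamma_mat ovals par U2 u * Bm u w) = (if U2 = w then 1 else 0)"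
  unfolding row_U2 by (cases w) auto

lemma AB_U3: "w \<in> verts ovals \<Longrightarrow> (\<Sum>u\<in>verts ovals. gamma_mat ovals par U3 u * Bm u w) = (if U3 = w then 1 else 0)"
  unfolding row_U3 by (cases w) auto

lemma AB_RO: assumes "w \<in> verts ovals"
  shows "(\<Sum>u\<in>verts ovals. gamma_mat ovals par ROut u * Bm u w) = (if ROut = w then 1 else 0)"
proof -
  let ?R = "roots ovals par"
  let ?k = "real (card ?R)"
  have w: "w \<in> {U1,U2,U3,ROut} \<or> (\<exists>q\<in>ovals. w = RIn q) \<or> (\<exists>y\<in>ovals. w = Ov y)"
    using assms by (auto simp: verts_def regions_def)
  have "2 * (1 - ?k) * Bm ROut w + Bm U1 w + (\<Sum>x\<in>?R. Bm (Ov x) w) = (if ROut = w then 1 else 0)"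
  proof -
    { assume "w = U1"
      have "(\<Sum>x\<in>?R. Bm (Ov x) w) = (\<Sum>x\<in>?R. 2)" using \<open>w = U1\<close> by (intro sum.cong) (auto simp: sg_rootm)
      then have ?thesis using \<open>w = U1\<close> by (simp add: algebra_simps) }
    moreover
    { assume "w = U2 \<or> w = U3"
      have "(\<Sum>x\<in>?R. Bm (Ov x) w) = (\<Sum>x\<in>?R. -1)" using \<open>w = U2 \<or> w = U3\<close> by (intro sum.cong) (auto simp: sg_rootm)
      then have ?thesis using \<open>w = U2 \<or> w = U3\<close> by (auto simp: algebra_simps) }
    moreover
    { assume "w = ROut" then have ?thesis by simp }
    moreover
    { fix q assume q: "q \<in> ovals" "w = RIn q"
      have "(\<Sum>x\<in>?R. Bm (Ov x) w) = (\<Sum>x\<in>?R. if (q,x) \<in> r\<^sup>* then sg q else 0)"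
        using q by (intro sum.cong) (auto simp: sg_rootm)
      then have ?thesis using q sum_root_ind[OF q(1)] by simp }
    moreover
    { fix y assume y: "y \<in> ovals" "w = Ov y"
      have "(\<Sum>x\<in>?R. Bm (Ov x) w) = (\<Sum>x\<in>?R. if (y,x) \<in> r\<^sup>* then -2 * sg y else 0)"
        using y by (intro sum.cong) (auto simp: sg_rootm roots_def rt_none)
      then have ?thesis using y sum_root_ind[OF y(1), of "-2 * sg y"] by simp }
    ultimately show ?thesis using w by blast
  qed
  then show ?thesis by (simp add: row_RO)
qed

lemma AB_R: assumes p: "p \<in> ovals" and "w \<in> verts ovals"
  shows "(\<Sum>u\<in>verts ovals. gamma_mat ovals par (RIn p) u * Bm u w) = (if RIn p = w then 1 else 0)"
proof -
  let ?C = "children ovals par p"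
  let ?k = "real (card ?C)"
  have w: "w \<in> {U1,U2,U3,ROut} \<or> (\<exists>q\<in>ovals. w = RIn q) \<or> (\<exists>y\<in>ovals. w = Ov y)"
    using assms by (auto simp: verts_def regions_def)
  have "2 * (1 - ?k) * Bm (RIn p) w + Bm (Ov p) w + (\<Sum>x\<in>?C. Bm (Ov x) w) = (if RIn p = w then 1 else 0)"
  proof -
    { assume "w = U1"
      have "(\<Sum>x\<in>?C. Bm (Ov x) w) = (\<Sum>x\<in>?C. -2 * sg p)" using \<open>w = U1\<close> by (intro sum.cong) (auto simp: sg_chm)
      then have ?thesis using \<open>w = U1\<close> by (simp add: algebra_simps) }
    moreover
    { assume "w = U2 \<or> w = U3"
      have "(\<Sum>x\<in>?C. Bm (Ov x) w) = (\<Sum>x\<in>?C. sg p)" using \<open>w = U2 \<or> w = U3\<close> by (intro sum.cong) (auto simp: sg_chm)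
      then have ?thesis using \<open>w = U2 \<or> w = U3\<close> by (auto simp: algebra_simps) }
    moreover
    { assume "w = ROut" then have ?thesis by simp }
    moreover
    { fix q assume q: "q \<in> ovals" "w = RIn q"
      have "(\<Sum>x\<in>?C. Bm (Ov x) w) = (\<Sum>x\<in>?C. if (q,x) \<in> r\<^sup>* then - (sg q * sg p) else 0)"
        using q by (intro sum.cong) (auto simp: sg_chm)
      then have ?thesis using q sum_ch_ind[OF p, of q "- (sg q * sg p)"] sg_sq[of p] by (auto simp: mult.commute) }
    moreover
    { fix y assume y: "y \<in> ovals" "w = Ov y"
      have ?thesis
      proof (cases "(p,y) \<in> r\<^sup>*")
        case True
        have "(\<Sum>x\<in>?C. Bm (Ov x) w) = (\<Sum>x\<in>?C. 2 * sg p * sg y)"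
          using y True by (intro sum.cong) (auto simp: sg_chm children_def rt_some)
        then show ?thesis using y True by (simp add: algebra_simps)
      next
        case False
        have "(\<Sum>x\<in>?C. Bm (Ov x) w) = (\<Sum>x\<in>?C. if (y,x) \<in> r\<^sup>* then 2 * sg p * sg y else 0)"
          using y False by (intro sum.cong) (auto simp: sg_chm children_def rt_some)
        then show ?thesis using y False sum_ch_ind[OF p, of y "2 * sg p * sg y"] by auto
      qed }
    ultimately show ?thesis using w by blast
  qed
  then show ?thesis by (simp add: row_R[OF p])
qed

lemma AB_O: assumes x: "x \<in> ovals" and "w \<in> verts ovals"
  shows "(\<Sum>u\<in>verts ovals. gamma_mat ovals par (Ov x) u * Bm u w) = (if Ov x = w then 1 else 0)"
proof -
  have w: "w \<in> {U1,U2,U3,ROut} \<or> (\<exists>q\<in>ovals. w = RIn q) \<or> (\<exists>y\<in>ovals. w = Ov y)"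
    using assms by (auto simp: verts_def regions_def)
  show ?thesis
  proof (cases "par x")
    case None
    have sx: "sg x = 1" using None by (simp add: sg_root)
    have "Bm ROut w + Bm (RIn x) w = (if Ov x = w then 1 else 0)"
      using w sx rt_none[of x] None by (auto split: if_splits)
    then show ?thesis using None by (simp add: row_O[OF x])
  next
    case (Some p)
    have sx: "sg x = - sg p" using Some x by (simp add: sg_child)
    have np: "(p,x) \<notin> r\<^sup>*" using Some x no_cycle[of x p] tr_some[OF x Some, of p] by auto
    have "Bm (RIn p) w + Bm (RIn x) w = (if Ov x = w then 1 else 0)"
      using w sx rt_some[OF x Some] np sg_sq[of x] by (auto split: if_splits)
    then show ?thesis using Some by (simp add: row_O[OF x])
  qed
qed

lemma AB: "v \<in> verts ovals \<Longrightarrow> w \<in> verts ovals \<Longrightarrow>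
   (\<Sum>u\<in>verts ovals. gamma_mat ovals par v u * Bm u w) = (if v = w then 1 else 0)"
  using AB_U1 AB_U2 AB_U3 AB_RO AB_R AB_O by (auto simp: verts_def regions_def split: if_splits)

lemma inv_Bm: "is_inverse_on (verts ovals) (gamma_mat ovals par) Bm"
  unfolding is_inverse_on_def
proof (intro conjI ballI)
  fix v w assume "v \<in> verts ovals" "w \<in> verts ovals"
  then show "(\<Sum>u\<in>verts ovals. gamma_mat ovals par v u * Bm u w) = (if v = w then 1 else 0)" by (rule AB)
  have "(\<Sum>u\<in>verts ovals. Bm v u * gamma_mat ovals par u w) = (\<Sum>u\<in>verts ovals. gamma_mat ovals par w u * Bm u v)"
    by (intro sum.cong) (auto simp: Bm_sym[of v] gm_sym[of _ w])
  also have "\<dots> = (if v = w then 1 else 0)" using AB \<open>v \<in> _\<close> \<open>w \<in> _\<close> by auto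
  finally show "(\<Sum>u\<in>verts ovals. Bm v u * gamma_mat ovals par u w) = (if v = w then 1 else 0)" .
qed


end

lemma inv_unique:
  assumes "finite V" "is_inverse_on V A B" "is_inverse_on V A B'" "v \<in> V" "w \<in> V"
  shows "B' v w = B v w"
proof -
  have "B' v w = (\<Sum>u\<in>V. B' v u * (if u = w then 1 else 0))"
    using assms by (simp add: if_distrib sum.delta cong: if_cong)
  also have "\<dots> = (\<Sum>u\<in>V. B' v u * (\<Sum>t\<in>V. A u t * B t w))"
    using assms(2,5) by (intro sum.cong) (auto simp: is_inverse_on_def)
  also have "\<dots> = (\<Sum>u\<in>V. \<Sum>t\<in>V. B' v u * A u t * B t w)"
    by (simp add: sum_distrib_left mult.assoc)
  also have "\<dots> = (\<Sum>t\<in>V. \<Sum>u\<in>V. B' v u * A u t * B t w)"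
    by (rule sum.swap)
  also have "\<dots> = (\<Sum>t\<in>V. (\<Sum>u\<in>V. B' v u * A u t) * B t w)"
    by (simp add: sum_distrib_right)
  also have "\<dots> = (\<Sum>t\<in>V. (if v = t then 1 else 0) * B t w)"
    using assms(3,4) by (intro sum.cong) (auto simp: is_inverse_on_def)
  also have "\<dots> = (\<Sum>t\<in>V. if v = t then B t w else 0)" by (intro sum.cong) auto
  also have "\<dots> = B v w" using assms by simp
  finally show ?thesis .
qed

lemma sum_pm:
  assumes "finite S" "\<forall>x\<in>S. eps x = 1 \<or> eps x = -1" "e = 1 \<or> e = -1"
  shows "(\<Sum>x\<in>S. real_of_int (eps x)) = real_of_int e * (real (card {x\<in>S. eps x = e}) - real (card {x\<in>S. eps x \<noteq> e}))"
proof -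
  have "(\<Sum>x\<in>S. real_of_int (eps x)) = (\<Sum>x\<in>S. if eps x = e then real_of_int e else - real_of_int e)"
    using assms by (intro sum.cong) auto
  also have "\<dots> = real_of_int e * real (card {x\<in>S. eps x = e}) - real_of_int e * real (card {x\<in>S. eps x \<noteq> e})"
    using assms(1) by (simp add: sum.If_cases Int_def sum_negf)
  finally show ?thesis by (simp add: algebra_simps)
qed

context ptree begin

lemma c_eq: assumes "v \<in> verts ovals"
  shows "c_vec ovals par eps v = -2 * (\<Sum>x\<in>ovals. s_vec ovals par eps (Ov x) * Bm (Ov x) v)"
proof -
  have ex: "is_inverse_on (verts ovals) (gamma_mat ovals par) (inverse_on (verts ovals) (gamma_mat ovals par))"
    unfolding inverse_on_def by (rule someI[of _ Bm]) (rule inv_Bm)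
  have "(\<Sum>w\<in>verts ovals. s_vec ovals par eps w * inverse_on (verts ovals) (gamma_mat ovals par) w v)
      = (\<Sum>w\<in>verts ovals. s_vec ovals par eps w * Bm w v)"
    using inv_unique[OF fin_verts inv_Bm ex _ assms] by (intro sum.cong) auto
  also have "\<dots> = (\<Sum>x\<in>ovals. s_vec ovals par eps (Ov x) * Bm (Ov x) v)"
    by (simp add: sum_verts s_vec_def)
  finally show ?thesis by (simp add: c_vec_def)
qed

lemma sg_pm: "sg x = 1 \<or> sg x = -1"
  unfolding sg_def by (cases "even (depth ovals par x)") auto

lemma s_Ov: "s_vec ovals par eps (Ov x) = - sg x * real_of_int (eps x)"
  by (simp add: s_vec_def sg_def)

end

theorem proposition1p7:
  fixes ovals :: "'a set" and par :: "'a \<Rightarrow> 'a option" and eps :: "'a \<Rightarrow> int"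
  assumes "even_scheme ovals par eps"
  shows "invertible_on (verts ovals) (gamma_mat ovals par)
    \<and> c_vec ovals par eps U1 = -4 * (real (Lam_minus ovals eps) - real (Lam_plus ovals eps))
    \<and> c_vec ovals par eps U2 = 2 * (real (Lam_minus ovals eps) - real (Lam_plus ovals eps))
    \<and> c_vec ovals par eps U3 = 2 * (real (Lam_minus ovals eps) - real (Lam_plus ovals eps))
    \<and> (\<forall>R\<in>regions ovals. c_vec ovals par eps R =
         (-1) ^ vpar ovals par R * 2 * (real (Lam_minus_R ovals par eps R) - real (Lam_plus_R ovals par eps R)))
    \<and> (\<forall>x\<in>ovals. c_vec ovals par eps (Ov x) =
         s_vec ovals par eps (Ov x) * (4 + 4 * (real (Pi_minus ovals par eps x) - real (Pi_plus ovals par eps x))))"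
proof -
  interpret ptree ovals par using assms by unfold_locales (auto simp: even_scheme_def)
  have pm: "\<forall>x\<in>ovals. eps x = 1 \<or> eps x = -1" using assms by (simp add: even_scheme_def)
  have sumeps: "(\<Sum>x\<in>ovals. real_of_int (eps x)) = real (Lam_plus ovals eps) - real (Lam_minus ovals eps)"
  proof -
    have "{x\<in>ovals. eps x \<noteq> 1} = {x\<in>ovals. eps x = -1}" using pm by auto
    then show ?thesis using sum_pm[OF fin pm, of 1] by (simp add: Lam_plus_def Lam_minus_def)
  qed
  have inv: "invertible_on (verts ovals) (gamma_mat ovals par)"
    unfolding invertible_on_def using inv_Bm by blast
  have V: "U1 \<in> verts ovals" "U2 \<in> verts ovals" "U3 \<in> verts ovals"
    by (auto simp: verts_def)
  have cU1: "c_vec ovals par eps U1 = -4 * (real (Lam_minus ovals eps) - real (Lam_plus ovals eps))"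
  proof -
    have "(\<Sum>x\<in>ovals. s_vec ovals par eps (Ov x) * Bm (Ov x) U1) = (\<Sum>x\<in>ovals. -2 * real_of_int (eps x))"
      apply (intro sum.cong refl)
        subgoal for x using sg_pm[of x] by (auto simp: s_Ov)
        done
    then show ?thesis using sumeps by (simp add: c_eq[OF V(1)] sum_negf sum_distrib_left[symmetric])
  qed
  have cU23: "c_vec ovals par eps u = 2 * (real (Lam_minus ovals eps) - real (Lam_plus ovals eps))"
    if "u = U2 \<or> u = U3" for u
  proof -
    have u: "u \<in> verts ovals" using that V by auto
    have "(\<Sum>x\<in>ovals. s_vec ovals par eps (Ov x) * Bm (Ov x) u) = (\<Sum>x\<in>ovals. real_of_int (eps x))"
      using that apply (intro sum.cong refl)
        subgoal for x using sg_pm[of x] by (auto simp: s_Ov)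
        done
    then show ?thesis using sumeps by (simp add: c_eq[OF u])
  qed
  have cR: "c_vec ovals par eps R =
         (-1) ^ vpar ovals par R * 2 * (real (Lam_minus_R ovals par eps R) - real (Lam_plus_R ovals par eps R))"
    if R: "R \<in> regions ovals" for R
  proof -
    have Rv: "R \<in> verts ovals" using R by (simp add: verts_def)
    show ?thesis
    proof (cases "R = ROut")
      case True
      have "(\<Sum>x\<in>ovals. s_vec ovals par eps (Ov x) * Bm (Ov x) R) = 0" using True by simp
      then show ?thesis using True c_eq[OF Rv] by (simp add: Lam_minus_R_def Lam_plus_R_def)
    next
      case False
      then obtain p where p: "p \<in> ovals" "R = RIn p" using R by (auto simp: regions_def)
      let ?S = "{x\<in>ovals. (p,x) \<in> r\<^sup>*}"
      have "(\<Sum>x\<in>ovals. s_vec ovals par eps (Ov x) * Bm (Ov x) R)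
          = (\<Sum>x\<in>ovals. if x \<in> ?S then - sg p * real_of_int (eps x) else 0)"
        using p apply (intro sum.cong refl)
          subgoal for x using sg_pm[of x] sg_pm[of p] p by (auto simp: s_Ov)
          done
      also have "\<dots> = - sg p * (\<Sum>x\<in>?S. real_of_int (eps x))"
        using fin by (simp add: sum.If_cases Int_def sum_distrib_left)
      also have "(\<Sum>x\<in>?S. real_of_int (eps x)) = real (card {x\<in>?S. eps x = 1}) - real (card {x\<in>?S. eps x \<noteq> 1})"
        using sum_pm[of ?S eps 1] fin pm by simp
      also have "{x\<in>?S. eps x = 1} = {x\<in>ovals. eps x = 1 \<and> region_in_disk ovals par R x}"
        using p by (auto simp: inside_def rtrancl_eq_or_trancl)
      also have "{x\<in>?S. eps x \<noteq> 1} = {x\<in>ovals. eps x = -1 \<and> region_in_disk ovals par R x}"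
        using p pm by (auto simp: inside_def rtrancl_eq_or_trancl)
      finally have X: "(\<Sum>x\<in>ovals. s_vec ovals par eps (Ov x) * Bm (Ov x) R) = - sg p * (real (card {x \<in> ovals. eps x = 1 \<and> region_in_disk ovals par R x}) - real (card {x \<in> ovals. eps x = - 1 \<and> region_in_disk ovals par R x}))" .
      show ?thesis using p c_eq[OF Rv] X
        by (simp add: Lam_minus_R_def Lam_plus_R_def sg_def algebra_simps)
    qed
  qed
  have cO: "c_vec ovals par eps (Ov y) =
         s_vec ovals par eps (Ov y) * (4 + 4 * (real (Pi_minus ovals par eps y) - real (Pi_plus ovals par eps y)))"
    if y: "y \<in> ovals" for y
  proof -
    have yv: "Ov y \<in> verts ovals" using y by (simp add: verts_def)
    let ?P = "{x\<in>ovals. injective_pair ovals par y x}"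
    have T: "{x\<in>ovals. (x,y) \<in> r\<^sup>* \<or> (y,x) \<in> r\<^sup>*} = insert y ?P"
      using y by (auto simp: injective_pair_def inside_def rtrancl_eq_or_trancl)
    have yP: "y \<notin> ?P" using acyc by (auto simp: injective_pair_def inside_def acyclic_def)
    have finP: "finite ?P" using fin by simp
    have "(\<Sum>x\<in>ovals. s_vec ovals par eps (Ov x) * Bm (Ov x) (Ov y))
          = (\<Sum>x\<in>ovals. if x \<in> {x\<in>ovals. (x,y) \<in> r\<^sup>* \<or> (y,x) \<in> r\<^sup>*} then 2 * sg y * real_of_int (eps x) else 0)"
      apply (intro sum.cong refl)
        subgoal for x using sg_pm[of x] sg_pm[of y] y by (auto simp: s_Ov)
        done
    also have "\<dots> = 2 * sg y * (\<Sum>x\<in>insert y ?P. real_of_int (eps x))"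
      unfolding T[symmetric] using fin by (simp add: sum.If_cases Int_def sum_distrib_left)
    also have "(\<Sum>x\<in>insert y ?P. real_of_int (eps x)) = real_of_int (eps y) + (\<Sum>x\<in>?P. real_of_int (eps x))"
      using yP finP by simp
    also have "(\<Sum>x\<in>?P. real_of_int (eps x)) = real_of_int (eps y) * (real (card {x\<in>?P. eps x = eps y}) - real (card {x\<in>?P. eps x \<noteq> eps y}))"
      using sum_pm[OF finP, of eps "eps y"] pm y by auto
    also have "{x\<in>?P. eps x = eps y} = {x \<in> ovals. injective_pair ovals par y x \<and> eps x = eps y}" by auto
    also have "{x\<in>?P. eps x \<noteq> eps y} = {x \<in> ovals. injective_pair ovals par y x \<and> eps x \<noteq> eps y}" by auto
    finally show ?thesis
      by (simp add: c_eq[OF yv] s_Ov Pi_minus_def Pi_plus_def algebra_simps)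
  qed
  show ?thesis using inv cU1 cU23 cR cO by blast
qed

end
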